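(* Let $\delta_j,\delta_k$ be coprime integers with $1<\delta_j<\delta_k$, and let $(x'_j,x'_k)$ be a B\'ezout couple for $(\delta_j,\ \delta_k\bmod\delta_j)$, associated to $i=x'_j\delta_j+x'_k(\delta_k\bmod\delta_j)\le\delta_j$. Then $\big(x'_k,\ x'_j-x'_k\lfloor\delta_k/\delta_j\rfloor\big)$ is a B\'ezout couple for $(\delta_k,\delta_j)$ (associated to the same $i$).
   Context: For coprime positive integers $p,q$, a B\'ezout couple for $(p,q)$ associated to $i\in\{1,\ldots,\max\{p,q\}\}$ is a pair $(x,y)\in\mathbb Z^2$ with $xp+yq=i$ and either $0<y\le p$ (the $\lambda$-B\'ezout couple of $i$, unique) or $0<x\le q$ (the $\mu$-B\'ezout couple of $i$, unique). Note $\delta_k\bmod\delta_j\ge1$ is coprime to $\delta_j$. *)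

theory Defs
  imports Complex_Main
begin

definition lambda_bezout_couple :: "int \<Rightarrow> int \<Rightarrow> int \<Rightarrow> int \<times> int \<Rightarrow> bool" where
  "lambda_bezout_couple p q i xy \<longleftrightarrow>
     1 \<le> i \<and> i \<le> max p q \<and> fst xy * p + snd xy * q = i \<and> 0 < snd xy \<and> snd xy \<le> p"

definition mu_bezout_couple :: "int \<Rightarrow> int \<Rightarrow> int \<Rightarrow> int \<times> int \<Rightarrow> bool" where
  "mu_bezout_couple p q i xy \<longleftrightarrow>
     1 \<le> i \<and> i \<le> max p q \<and> fst xy * p + snd xy * q = i \<and> 0 < fst xy \<and> fst xy \<le> q"

definition bezout_couple :: "int \<Rightarrow> int \<Rightarrow> int \<Rightarrow> int \<times> int \<Rightarrow> bool" where
  "bezout_couple p q i xy \<longleftrightarrow> lambda_bezout_couple p q i xy \<or> mu_bezout_couple p q i xy"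

end

theory Submission
  imports Defs
begin

theorem lemma3p3:
  fixes dj dk xj xk i :: int
  assumes "coprime dj dk" and "1 < dj" and "dj < dk"
    and "bezout_couple dj (dk mod dj) i (xj, xk)"
  shows "bezout_couple dk dj i (xk, xj - xk * \<lfloor>of_int dk / (of_int dj :: real)\<rfloor>)"
proof -
  define q where "q = dk div dj"
  define r where "r = dk mod dj"
  have fl: "\<lfloor>of_int dk / (of_int dj :: real)\<rfloor> = q"
    unfolding q_def by (rule floor_divide_of_int_eq)
  have dk: "dk = q * dj + r" unfolding q_def r_def by simp
  have r0: "0 \<le> r" "r < dj" unfolding r_def using assms(2) by auto
  have rne: "r \<noteq> 0"
  proof
    assume "r = 0"
    hence "dj dvd dk" unfolding r_def by auto
    hence "dj dvd gcd dj dk" by simp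
    with assms(1,2) show False by simp
  qed
  have r1: "1 \<le> r" using r0 rne by simp
  have q1: "1 \<le> q"
  proof -
    have "dj div dj \<le> dk div dj" using assms(2,3) by (intro zdiv_mono1) auto
    thus ?thesis using assms(2) unfolding q_def by simp
  qed
  have "max dj r = dj" using r0 by simp
  with assms(4) have B: "1 \<le> i" "i \<le> dj" "xj * dj + xk * r = i"
    "(0 < xk \<and> xk \<le> dj) \<or> (0 < xj \<and> xj \<le> r)"
    unfolding bezout_couple_def lambda_bezout_couple_def mu_bezout_couple_def r_def by auto
  have eq: "xk * dk + (xj - xk * q) * dj = i" using B(3) dk by (simp add: algebra_simps)
  have mx: "max dk dj = dk" using assms(3) by simp
  from B(4) show ?thesis
  proof
    assume "0 < xk \<and> xk \<le> dj"
    thus ?thesis unfolding bezout_couple_def mu_bezout_couple_def fl mx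
      using eq B(1,2) assms(3) by auto
  next
    assume h: "0 < xj \<and> xj \<le> r"
    have "xk * r \<le> 0" using B(2,3) h assms(2)
      by (smt (verit) mult_le_cancel_right1)
    hence xk0: "xk \<le> 0" using r1 by (smt (verit) mult_pos_pos)
    have "xj * dj \<le> r * dj" using h assms(2) by (intro mult_right_mono) auto
    hence lt: "(-xk) * r < dj * r" using B(1,3) by (simp add: algebra_simps)
    have "-xk < dj" using mult_less_cancel_right_pos[of r "-xk" dj] lt r1 by simp
    hence xkb: "-xk \<le> dj - 1" by simp
    have "xk * q \<le> 0" using xk0 q1 by (simp add: mult_nonpos_nonneg)
    hence ypos: "0 < xj - xk * q" using h by simp
    have "(xj - xk * q) * dj \<le> dj + (dj - 1) * dk"
    proof -
      have "(-xk) * dk \<le> (dj - 1) * dk" using xkb assms(2,3) by (intro mult_right_mono) auto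
      thus ?thesis using eq B(2) by (simp add: algebra_simps)
    qed
    also have "\<dots> \<le> dk * dj" using assms(2,3) by (simp add: algebra_simps)
    finally have "xj - xk * q \<le> dk" using assms(2) by simp
    thus ?thesis unfolding bezout_couple_def lambda_bezout_couple_def fl mx
      using eq B(1,2) assms(3) ypos by auto
  qed
qed

end
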